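(* Every connected door space $X$ satisfies OCC; that is, there do not exist pairwise disjoint nonempty subsets $A,B,C,D$ of $X$ such that $A$ and $B$ are open and $C$ and $D$ are closed.
   Context: A topological space $(X,\mathcal{T})$ is a connected door space if every proper nonempty subset of $X$ (i.e. every $A$ with $\varnothing\ne A\subsetneq X$) is either open or closed, but not both. A space satisfies OCC (the open-closed condition) if there are no pairwise disjoint nonempty subsets $A,B,C,D$ with $A,B$ open and $C,D$ closed. *)

theory Defs
  imports "HOL-Analysis.Analysis"
begin

definition connected_door_space :: "'a topology \<Rightarrow> bool" where
  "connected_door_space T \<longleftrightarrow>
     (\<forall>A. A \<noteq> {} \<and> A \<subset> topspace T \<longrightarrow>
          ((openin T A \<or> closedin T A) \<and> \<not> (openin T A \<and> closedin T A)))"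

definition OCC :: "'a topology \<Rightarrow> bool" where
  "OCC T \<longleftrightarrow> \<not> (\<exists>A B C D.
     A \<subseteq> topspace T \<and> B \<subseteq> topspace T \<and> C \<subseteq> topspace T \<and> D \<subseteq> topspace T \<and>
     A \<noteq> {} \<and> B \<noteq> {} \<and> C \<noteq> {} \<and> D \<noteq> {} \<and>
     A \<inter> B = {} \<and> A \<inter> C = {} \<and> A \<inter> D = {} \<and>
     B \<inter> C = {} \<and> B \<inter> D = {} \<and> C \<inter> D = {} \<and>
     openin T A \<and> openin T B \<and> closedin T C \<and> closedin T D)"

end

theory Submission
  imports Defs
begin

theorem lemma2:
  fixes T :: "'a topology"
  assumes "connected_door_space T"
  shows "OCC T"
  unfolding OCC_def
proof
  assume "\<exists>A B C D.
     A \<subseteq> topspace T \<and> B \<subseteq> topspace T \<and> C \<subseteq> topspace T \<and> D \<subseteq> topspace T \<and>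
     A \<noteq> {} \<and> B \<noteq> {} \<and> C \<noteq> {} \<and> D \<noteq> {} \<and>
     A \<inter> B = {} \<and> A \<inter> C = {} \<and> A \<inter> D = {} \<and>
     B \<inter> C = {} \<and> B \<inter> D = {} \<and> C \<inter> D = {} \<and>
     openin T A \<and> openin T B \<and> closedin T C \<and> closedin T D"
  then obtain A B C D where h: "A \<subseteq> topspace T" "B \<subseteq> topspace T" "C \<subseteq> topspace T" "D \<subseteq> topspace T"
     "A \<noteq> {}" "B \<noteq> {}" "C \<noteq> {}" "D \<noteq> {}"
     "A \<inter> B = {}" "A \<inter> C = {}" "A \<inter> D = {}"
     "B \<inter> C = {}" "B \<inter> D = {}" "C \<inter> D = {}"
     "openin T A" "openin T B" "closedin T C" "closedin T D" by blast
  have door: "\<And>S. S \<noteq> {} \<Longrightarrow> S \<subset> topspace T \<Longrightarrow> (openin T S \<or> closedin T S) \<and> \<not> (openin T S \<and> closedin T S)"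
    using assms unfolding connected_door_space_def by blast
  have pA: "A \<noteq> {}" "A \<subset> topspace T" using h by auto
  have pB: "B \<noteq> {}" "B \<subset> topspace T" using h by auto
  have pC: "C \<noteq> {}" "C \<subset> topspace T" using h by auto
  have pD: "D \<noteq> {}" "D \<subset> topspace T" using h by auto
  have pAC: "A \<union> C \<noteq> {}" "A \<union> C \<subset> topspace T" using h by auto
  have pAD: "A \<union> D \<noteq> {}" "A \<union> D \<subset> topspace T" using h by auto
  have pBC: "B \<union> C \<noteq> {}" "B \<union> C \<subset> topspace T" using h by auto
  have pBD: "B \<union> D \<noteq> {}" "B \<union> D \<subset> topspace T" using h by auto
  have nA: "\<not> closedin T A" using door[OF pA] h by blast
  have nB: "\<not> closedin T B" using door[OF pB] h by blast
  have nC: "\<not> openin T C" using door[OF pC] h by blast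
  have nD: "\<not> openin T D" using door[OF pD] h by blast
  have eq1: "(A \<union> C) - (A \<union> D) = C" "(A \<union> D) - (A \<union> C) = D"
      "(B \<union> C) - (B \<union> D) = C" "(B \<union> D) - (B \<union> C) = D" using h by auto
  have eq2: "(A \<union> C) \<inter> (A \<union> D) = A" "(B \<union> C) \<inter> (B \<union> D) = B"
     "(A \<union> C) \<inter> (B \<union> C) = C" using h by auto
  have oAC: "openin T (A \<union> C)"
  proof (rule ccontr)
    assume a: "\<not> openin T (A \<union> C)"
    then have c1: "closedin T (A \<union> C)" using door[OF pAC] by blast
    show False
    proof (cases "openin T (A \<union> D)")
      case True
      then have "openin T D" using openin_diff[OF True c1] eq1 by simp
      then show False using nD by simp
    next
      case False
      then have "closedin T (A \<union> D)" using door[OF pAD] by blast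
      then have "closedin T A" using closedin_Int[OF c1] eq2 by metis
      then show False using nA by simp
    qed
  qed
  have oBC: "openin T (B \<union> C)"
  proof (rule ccontr)
    assume a: "\<not> openin T (B \<union> C)"
    then have c1: "closedin T (B \<union> C)" using door[OF pBC] by blast
    show False
    proof (cases "openin T (B \<union> D)")
      case True
      then have "openin T D" using openin_diff[OF True c1] eq1 by simp
      then show False using nD by simp
    next
      case False
      then have "closedin T (B \<union> D)" using door[OF pBD] by blast
      then have "closedin T B" using closedin_Int[OF c1] eq2 by metis
      then show False using nB by simp
    qed
  qed
  have "openin T C" using openin_Int[OF oAC oBC] eq2 by metis
  then show False using nC by simp
qed

end
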